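(* Let $(X,\tau)$ be a topological space. Then: (i) every subset of $X$ is $\beta$-locally closed, and every function $f\colon (X,\tau)\to(Y,\sigma)$ into any topological space $(Y,\sigma)$ is $\beta$-LC-continuous; (ii) $(X,\tau)$ is $\beta$-submaximal.
   Context: For a subset $A$ of a topological space $(X,\tau)$, $\mathrm{cl}(A)$ and $\mathrm{int}(A)$ denote closure and interior. $A$ is $\beta$-open if $A \subseteq \mathrm{cl}(\mathrm{int}(\mathrm{cl}(A)))$, and $\beta$-closed if $X\setminus A$ is $\beta$-open. $A$ is $\beta$-locally closed if $A$ is the intersection of a $\beta$-open set and a $\beta$-closed set. The $\beta$-closure $\mathrm{cl}_\beta(A)$ is the intersection of all $\beta$-closed sets containing $A$; $A$ is $\beta$-dense if $\mathrm{cl}_\beta(A)=X$. The space $X$ is $\beta$-submaximal if every $\beta$-dense subset of $X$ is $\beta$-open. A function $f\colon (X,\tau)\to(Y,\sigma)$ is $\beta$-LC-continuous if $f^{-1}(V)$ is $\beta$-locally closed in $X$ for every open set $V\subseteq Y$. *)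

theory Defs
  imports "HOL-Analysis.Analysis"
begin

definition beta_open :: "'a topology \<Rightarrow> 'a set \<Rightarrow> bool" where
  "beta_open T A \<longleftrightarrow> A \<subseteq> topspace T \<and>
     A \<subseteq> T closure_of (T interior_of (T closure_of A))"

definition beta_closed :: "'a topology \<Rightarrow> 'a set \<Rightarrow> bool" where
  "beta_closed T A \<longleftrightarrow> A \<subseteq> topspace T \<and> beta_open T (topspace T - A)"

definition beta_locally_closed :: "'a topology \<Rightarrow> 'a set \<Rightarrow> bool" where
  "beta_locally_closed T A \<longleftrightarrow> (\<exists>U F. beta_open T U \<and> beta_closed T F \<and> A = U \<inter> F)"

definition beta_closure :: "'a topology \<Rightarrow> 'a set \<Rightarrow> 'a set" where
  "beta_closure T A = topspace T \<inter> \<Inter> {F. beta_closed T F \<and> A \<subseteq> F}"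

definition beta_dense :: "'a topology \<Rightarrow> 'a set \<Rightarrow> bool" where
  "beta_dense T A \<longleftrightarrow> A \<subseteq> topspace T \<and> beta_closure T A = topspace T"

definition beta_submaximal :: "'a topology \<Rightarrow> bool" where
  "beta_submaximal T \<longleftrightarrow> (\<forall>A. beta_dense T A \<longrightarrow> beta_open T A)"

definition beta_LC_continuous :: "'a topology \<Rightarrow> 'b topology \<Rightarrow> ('a \<Rightarrow> 'b) \<Rightarrow> bool" where
  "beta_LC_continuous X Y f \<longleftrightarrow>
     (\<forall>V. openin Y V \<longrightarrow> beta_locally_closed X {x \<in> topspace X. f x \<in> V})"

end

theory Submission
  imports Defs
begin

lemma open_beta_open:
  assumes "openin X U" shows "beta_open X U"
proof -
  have s: "U \<subseteq> topspace X" using assms by (rule openin_subset)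
  have "U \<subseteq> X interior_of (X closure_of U)"
    using closure_of_subset[OF s] assms by (rule interior_of_maximal)
  also have "\<dots> \<subseteq> X closure_of (X interior_of (X closure_of U))"
    by (rule closure_of_subset) (rule interior_of_subset_topspace)
  finally show ?thesis unfolding beta_open_def using s by (intro conjI)
qed

lemma closed_beta_closed:
  assumes "closedin X F" shows "beta_closed X F"
  using assms unfolding beta_closed_def
  by (simp add: closedin_def open_beta_open)

lemma dense_beta_open:
  assumes "A \<subseteq> topspace X" "X closure_of A = topspace X" shows "beta_open X A"
  using assms unfolding beta_open_def
  by (simp add: closure_of_topspace interior_of_topspace)

lemma all_blc:
  assumes A: "A \<subseteq> topspace X" shows "beta_locally_closed X A"
proof -
  let ?U = "A \<union> (topspace X - X closure_of A)"
  have "X closure_of ?U = topspace X"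
  proof
    show "X closure_of ?U \<subseteq> topspace X" by (rule closure_of_subset_topspace)
    have "X closure_of A \<subseteq> X closure_of ?U" by (rule closure_of_mono) (rule Un_upper1)
    moreover have "topspace X - X closure_of A \<subseteq> X closure_of ?U"
    proof -
      have s: "?U \<subseteq> topspace X" using A by blast
      have "topspace X - X closure_of A \<subseteq> ?U" by (rule Un_upper2)
      also have "?U \<subseteq> X closure_of ?U" by (rule closure_of_subset[OF s])
      finally show ?thesis .
    qed
    ultimately have "X closure_of A \<union> (topspace X - X closure_of A) \<subseteq> X closure_of ?U"
      by (rule Un_least)
    thus "topspace X \<subseteq> X closure_of ?U" by blast
  qed
  moreover have "?U \<subseteq> topspace X" using A by blast
  ultimately have "beta_open X ?U" by (intro dense_beta_open)
  moreover have "beta_closed X (X closure_of A)" by (intro closed_beta_closed) simp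
  moreover have "A = ?U \<inter> X closure_of A" using A closure_of_subset[OF A] by blast
  ultimately show ?thesis unfolding beta_locally_closed_def by (intro exI conjI)
qed

lemma submax: "beta_submaximal X"
  unfolding beta_submaximal_def
proof (intro allI impI)
  fix A assume d: "beta_dense X A"
  hence A: "A \<subseteq> topspace X" and cl: "beta_closure X A = topspace X"
    unfolding beta_dense_def by auto
  show "beta_open X A"
    unfolding beta_open_def
  proof (rule conjI[OF A], rule subsetI, rule ccontr)
    fix x assume xA: "x \<in> A" and nx: "x \<notin> X closure_of (X interior_of (X closure_of A))"
    let ?W = "topspace X - X closure_of (X interior_of (X closure_of A))"
    let ?G = "?W - X closure_of A"
    have Wo: "openin X ?W" by (simp add: openin_diff)
    have Go: "openin X ?G" using Wo by (simp add: openin_diff)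
    have "?G \<noteq> {}"
    proof
      assume "?G = {}"
      hence "?W \<subseteq> X closure_of A" by blast
      hence "?W \<subseteq> X interior_of (X closure_of A)" using Wo by (rule interior_of_maximal)
      moreover have "X interior_of (X closure_of A) \<subseteq> X closure_of (X interior_of (X closure_of A))"
        by (simp add: closure_of_subset interior_of_subset_topspace)
      ultimately have "?W \<subseteq> X closure_of (X interior_of (X closure_of A))"
        by (rule subset_trans)
      moreover have "x \<in> ?W" using xA A nx by blast
      ultimately show False by blast
    qed
    then obtain y where y: "y \<in> ?G" by blast
    let ?F = "topspace X - ?G"
    have "closedin X ?F" using Go by (simp add: closedin_diff)
    hence "beta_closed X ?F" by (rule closed_beta_closed)
    moreover have "A \<subseteq> ?F" using A closure_of_subset[OF A] by blast
    ultimately have "beta_closure X A \<subseteq> ?F" unfolding beta_closure_def by blast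
    hence "y \<notin> beta_closure X A" using y by blast
    moreover have "y \<in> topspace X" using y by blast
    ultimately show False using cl by blast
  qed
qed

theorem corollary2p2:
  fixes X :: "'a topology"
  shows "(\<forall>A. A \<subseteq> topspace X \<longrightarrow> beta_locally_closed X A)
       \<and> (\<forall>(Y :: 'b topology) (f :: 'a \<Rightarrow> 'b).
            f \<in> topspace X \<rightarrow> topspace Y \<longrightarrow> beta_LC_continuous X Y f)
       \<and> beta_submaximal X"
proof (intro conjI allI impI)
  fix A :: "'a set" assume "A \<subseteq> topspace X" thus "beta_locally_closed X A" by (rule all_blc)
next
  fix Y :: "'b topology" and f :: "'a \<Rightarrow> 'b"
  show "beta_LC_continuous X Y f" unfolding beta_LC_continuous_def
    by (intro allI impI all_blc) (rule Collect_restrict)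
next
  show "beta_submaximal X" by (rule submax)
qed

end
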